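(* Any profinite minimal action $\Gamma\curvearrowright X$ of a countable group on a zero-dimensional compact metric space $X$ has comparison.
   Context: An action $\Gamma\curvearrowright X$ on a zero-dimensional compact metric space is profinite if the orbits of the induced action of $\Gamma$ on the set $\mathrm{Clo}(X)$ of clopen subsets of $X$ are all finite; it is minimal if every orbit in $X$ is dense. Let $\mathrm{Prob}_\Gamma(X)$ denote the set of $\Gamma$-invariant Borel probability measures on $X$. The action has comparison if for all nonempty clopen sets $A,B\subseteq X$ with $\mu(A)<\mu(B)$ for all $\mu\in\mathrm{Prob}_\Gamma(X)$, there exist a partition $A=\bigsqcup_{i=1}^n C_i$ into clopen sets and elements $\gamma_1,\dots,\gamma_n\in\Gamma$ such that the sets $\gamma_iC_i$ ($1\le i\le n$) are pairwise disjoint subsets of $B$. *)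

theory Defs
  imports "HOL-Probability.Probability"
begin

text \<open>A (left) action of a group \<open>'g\<close> (written additively via the class group_add,
  which is NOT assumed commutative) on a topological space \<open>'x\<close> by homeomorphisms.\<close>
definition group_action :: "('g::group_add \<Rightarrow> 'x::topological_space \<Rightarrow> 'x) \<Rightarrow> bool" where
  "group_action act \<longleftrightarrow>
     (\<forall>x. act 0 x = x) \<and>
     (\<forall>g h x. act (g + h) x = act g (act h x)) \<and>
     (\<forall>g. continuous_on UNIV (act g))"

definition clopen_set :: "'x::topological_space set \<Rightarrow> bool" where
  "clopen_set A \<longleftrightarrow> open A \<and> closed A"

definition zero_dimensional :: "'x::topological_space itself \<Rightarrow> bool" where
  "zero_dimensional _ \<longleftrightarrow>
     (\<forall>U::'x set. \<forall>x\<in>U. open U \<longrightarrow> (\<exists>C. clopen_set C \<and> x \<in> C \<and> C \<subseteq> U))"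

definition profinite_action :: "('g::group_add \<Rightarrow> 'x::topological_space \<Rightarrow> 'x) \<Rightarrow> bool" where
  "profinite_action act \<longleftrightarrow>
     (\<forall>A. clopen_set A \<longrightarrow> finite {act g ` A | g. True})"

definition minimal_action :: "('g::group_add \<Rightarrow> 'x::topological_space \<Rightarrow> 'x) \<Rightarrow> bool" where
  "minimal_action act \<longleftrightarrow> (\<forall>x. closure (range (\<lambda>g. act g x)) = UNIV)"

definition inv_prob_measures ::
  "('g::group_add \<Rightarrow> 'x::topological_space \<Rightarrow> 'x) \<Rightarrow> 'x measure set" where
  "inv_prob_measures act =
     {\<mu>. sets \<mu> = sets borel \<and> prob_space \<mu> \<and>
         (\<forall>g A. A \<in> sets borel \<longrightarrow> emeasure \<mu> (act g -` A) = emeasure \<mu> A)}"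

definition has_comparison :: "('g::group_add \<Rightarrow> 'x::topological_space \<Rightarrow> 'x) \<Rightarrow> bool" where
  "has_comparison act \<longleftrightarrow>
     (\<forall>A B. clopen_set A \<and> clopen_set B \<and> A \<noteq> {} \<and> B \<noteq> {} \<and>
        (\<forall>\<mu>\<in>inv_prob_measures act. measure \<mu> A < measure \<mu> B) \<longrightarrow>
        (\<exists>(n::nat) (C::nat \<Rightarrow> 'x set) (\<gamma>::nat \<Rightarrow> 'g).
            (\<forall>i<n. clopen_set (C i)) \<and>
            disjoint_family_on C {..<n} \<and>
            A = (\<Union>i<n. C i) \<and>
            disjoint_family_on (\<lambda>i. act (\<gamma> i) ` C i) {..<n} \<and>
            (\<forall>i<n. act (\<gamma> i) ` C i \<subseteq> B)))"

end

theory Submission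
  imports Defs
begin


lemma ga_zero: "group_action act \<Longrightarrow> act 0 x = x"
  by (simp add: group_action_def)
lemma ga_add: "group_action act \<Longrightarrow> act (g + h) x = act g (act h x)"
  by (simp add: group_action_def)
lemma ga_cont: "group_action act \<Longrightarrow> continuous_on UNIV (act g)"
  by (simp add: group_action_def)

lemma ga_inv1: "group_action act \<Longrightarrow> act (- g) (act g x) = x"
  using ga_add[of act "-g" g x] ga_zero[of act x] by simp
lemma ga_inv2: "group_action act \<Longrightarrow> act g (act (- g) x) = x"
  using ga_add[of act g "-g" x] ga_zero[of act x] by simp
lemma ga_inj: "group_action act \<Longrightarrow> inj (act g)"
  by (rule injI) (metis ga_inv1)
lemma ga_vimage: "group_action act \<Longrightarrow> act g -` A = act (- g) ` A"
proof (intro set_eqI iffI)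
  fix x assume "group_action act" "x \<in> act g -` A"
  then show "x \<in> act (- g) ` A" using ga_inv1[of act g x] by (metis image_eqI vimageD)
next
  fix x assume "group_action act" "x \<in> act (- g) ` A"
  then show "x \<in> act g -` A" using ga_inv2 by fastforce
qed
lemma ga_image_image: "group_action act \<Longrightarrow> act g ` act h ` A = act (g + h) ` A"
  by (auto simp: ga_add image_image)
lemma ga_image_Int: "group_action act \<Longrightarrow> act g ` (A \<inter> B) = act g ` A \<inter> act g ` B"
  by (simp add: ga_inj image_Int)
lemma ga_image_Compl: "group_action act \<Longrightarrow> act g ` (- A) = - act g ` A"
  using ga_vimage[of act "-g"] vimage_Compl[of "act (-g)" A] by simp
lemma ga_clopen: "group_action act \<Longrightarrow> clopen_set C \<Longrightarrow> clopen_set (act g ` C)"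
proof -
  assume a: "group_action act" "clopen_set C"
  have "act g ` C = act (- g) -` C" using ga_vimage[OF a(1), of "-g"] by simp
  moreover have "open (act (- g) -` C)" "closed (act (- g) -` C)"
    using a ga_cont[OF a(1), of "-g"] unfolding clopen_set_def
    by (auto intro: open_vimage closed_vimage)
  ultimately show ?thesis unfolding clopen_set_def by simp
qed
lemma fiber_count:
  fixes f :: "'g::group_add \<Rightarrow> 'a" and p :: "'a \<Rightarrow> 'b"
  assumes compf: "\<And>h h' g. f h = f h' \<Longrightarrow> f (h + g) = f (h' + g)"
    and compq: "\<And>h h' g. p (f h) = p (f h') \<Longrightarrow> p (f (h + g)) = p (f (h' + g))"
    and fin: "finite (range f)"
  shows "card {r\<in>range f. Q (p r)} * card (range (p \<circ> f))
       = card {s\<in>range (p \<circ> f). Q s} * card (range f)"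
proof -
  define Fib where "Fib s = {r\<in>range f. p r = s}" for s
  define N where "N = card (Fib (p (f 0)))"
  define tau where "tau g r = f (inv f r + g)" for g r
  have tau: "tau g (f h) = f (h + g)" for g h
  proof -
    have "f (inv f (f h)) = f h" by (rule f_inv_into_f) (rule rangeI)
    then show ?thesis unfolding tau_def by (rule compf)
  qed
  have cardF: "card (Fib s) = N" if s_in: "s \<in> range (p \<circ> f)" for s
  proof -
    obtain g where "s = (p \<circ> f) g" using s_in by blast
    then have s: "s = p (f g)" by simp
    have "bij_betw (tau g) (Fib (p (f 0))) (Fib s)"
    proof (rule bij_betw_byWitness[where f' = "tau (- g)"])
      show "\<forall>a\<in>Fib (p (f 0)). tau (- g) (tau g a) = a"
      proof
        fix a assume "a \<in> Fib (p (f 0))"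
        then obtain h where "a = f h" unfolding Fib_def by blast
        then show "tau (- g) (tau g a) = a" by (simp add: tau add.assoc)
      qed
      show "\<forall>a'\<in>Fib s. tau g (tau (- g) a') = a'"
      proof
        fix a assume "a \<in> Fib s"
        then obtain h where "a = f h" unfolding Fib_def by blast
        then show "tau g (tau (- g) a) = a" by (simp add: tau add.assoc)
      qed
      show "tau g ` Fib (p (f 0)) \<subseteq> Fib s"
      proof
        fix y assume "y \<in> tau g ` Fib (p (f 0))"
        then obtain h where h: "p (f h) = p (f 0)" "y = tau g (f h)"
          unfolding Fib_def by blast
        have "p (f (h + g)) = p (f (0 + g))" by (rule compq[OF h(1)])
        then show "y \<in> Fib s" unfolding Fib_def h(2) tau s by simp
      qed
      show "tau (- g) ` Fib s \<subseteq> Fib (p (f 0))"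
      proof
        fix y assume "y \<in> tau (- g) ` Fib s"
        then obtain h where h: "p (f h) = p (f g)" "y = tau (-g) (f h)"
          unfolding Fib_def s by blast
        have "p (f (h + - g)) = p (f (g + - g))" by (rule compq[OF h(1)])
        then show "y \<in> Fib (p (f 0))" unfolding Fib_def h(2) tau by simp
      qed
    qed
    then show ?thesis unfolding N_def by (simp add: bij_betw_same_card)
  qed
  have finF: "finite (Fib s)" for s using fin unfolding Fib_def by auto
  have disj: "\<forall>s\<in>S. \<forall>t\<in>S. s \<noteq> t \<longrightarrow> Fib s \<inter> Fib t = {}" for S
    unfolding Fib_def by auto
  have finq: "finite (range (p \<circ> f))"
  proof -
    have "range (p \<circ> f) = p ` range f" by (simp add: image_comp)
    then show ?thesis using fin by simp
  qed
  have e1: "range f = (\<Union>s\<in>range (p \<circ> f). Fib s)"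
    unfolding Fib_def by auto
  have e2: "{r\<in>range f. Q (p r)} = (\<Union>s\<in>{s\<in>range (p \<circ> f). Q s}. Fib s)"
    unfolding Fib_def by auto
  have c1: "card (range f) = card (range (p \<circ> f)) * N"
    unfolding e1 by (subst card_UN_disjoint[OF finq]) (auto simp: finF disj cardF)
  have c2: "card {r\<in>range f. Q (p r)} = card {s\<in>range (p \<circ> f). Q s} * N"
  proof -
    let ?S = "{s\<in>range (p \<circ> f). Q s}"
    have "card (\<Union>s\<in>?S. Fib s) = (\<Sum>s\<in>?S. card (Fib s))"
      by (rule card_UN_disjoint) (use finq finF in \<open>auto simp: Fib_def\<close>)
    also have "\<dots> = (\<Sum>s\<in>?S. N)" by (rule sum.cong) (auto intro: cardF)
    finally show ?thesis unfolding e2 by simp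
  qed
  show ?thesis unfolding c1 c2 by simp
qed



definition orbit_sets :: "('g::group_add \<Rightarrow> 'x::topological_space \<Rightarrow> 'x) \<Rightarrow> 'x set \<Rightarrow> 'x set set" where
  "orbit_sets act C = range (\<lambda>h. act (- h) ` C)"

definition nu :: "('g::group_add \<Rightarrow> 'x::topological_space \<Rightarrow> 'x) \<Rightarrow> 'x \<Rightarrow> 'x set \<Rightarrow> real" where
  "nu act x0 C = real (card {D\<in>orbit_sets act C. x0 \<in> D}) / real (card (orbit_sets act C))"

lemma orbit_sets_eq: "orbit_sets act C = {act g ` C | g. True}"
proof -
  have "range (\<lambda>h. act (- h) ` C) = range (\<lambda>g. act g ` C)"
    by (metis (no_types, lifting) ext minus_minus surj_def image_cong
          image_image[of "\<lambda>g. act g ` C" uminus UNIV] surj_def)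
  then show ?thesis unfolding orbit_sets_def by auto
qed

lemma orbit_sets_finite:
  "profinite_action act \<Longrightarrow> clopen_set C \<Longrightarrow> finite (orbit_sets act C)"
  unfolding orbit_sets_eq profinite_action_def by blast

lemma orb_compat:
  assumes "group_action act"
  shows "act (- (h + g)) ` E = act (- g) ` act (- h) ` E"
  by (simp add: ga_image_image[OF assms] minus_add)

lemma nu_via:
  fixes f :: "'g::group_add \<Rightarrow> 'a" and p :: "'a \<Rightarrow> 'x::topological_space set"
  assumes ga: "group_action act"
    and compf: "\<And>h h' g. f h = f h' \<Longrightarrow> f (h + g) = f (h' + g)"
    and pf: "\<And>h. p (f h) = act (- h) ` E"
    and fin: "finite (range f)"
  shows "nu act x0 E = real (card {r\<in>range f. x0 \<in> p r}) / real (card (range f))"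
proof -
  have compq: "p (f (h + g)) = p (f (h' + g))" if "p (f h) = p (f h')" for h h' g
    using that by (simp add: pf orb_compat[OF ga])
  have ro: "range (p \<circ> f) = orbit_sets act E"
    unfolding orbit_sets_def by (simp add: pf comp_def)
  have eq: "card {r\<in>range f. x0 \<in> p r} * card (range (p \<circ> f))
       = card {s\<in>range (p \<circ> f). x0 \<in> s} * card (range f)"
    by (rule fiber_count[of f p "\<lambda>s. x0 \<in> s", OF compf compq fin])
  have "range (p \<circ> f) = p ` range f" by (simp add: image_comp)
  then have fq: "finite (range (p \<circ> f))" using fin by simp
  have c1: "card (range f) > 0" using fin by (simp add: card_gt_0_iff)
  have c2: "card (range (p \<circ> f)) > 0" using fq by (simp add: card_gt_0_iff)
  have eqr: "real (card {r\<in>range f. x0 \<in> p r}) * real (card (range (p \<circ> f)))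
       = real (card {s\<in>range (p \<circ> f). x0 \<in> s}) * real (card (range f))"
    using arg_cong[OF eq, of real] by simp
  have "real (card {s\<in>range (p \<circ> f). x0 \<in> s}) / real (card (range (p \<circ> f)))
      = real (card {r\<in>range f. x0 \<in> p r}) / real (card (range f))"
  proof (subst frac_eq_eq)
    show "real (card (range (p \<circ> f))) \<noteq> 0" using c2 by simp
    show "real (card (range f)) \<noteq> 0" using c1 by simp
    show "real (card {s \<in> range (p \<circ> f). x0 \<in> s}) * real (card (range f)) =
       real (card {r \<in> range f. x0 \<in> p r}) * real (card (range (p \<circ> f)))"
      using eqr by simp
  qed
  then show ?thesis unfolding nu_def ro[symmetric] .
qed

lemma nu_add:
  assumes ga: "group_action act" and pf: "profinite_action act"
    and C: "clopen_set C" and D: "clopen_set D" and disj: "C \<inter> D = {}"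
  shows "nu act x0 (C \<union> D) = nu act x0 C + nu act x0 D"
proof -
  define f where "f h = (act (- h) ` C, act (- h) ` D)" for h
  have compf: "f (h + g) = f (h' + g)" if "f h = f h'" for h h' g
    using that unfolding f_def by (simp add: orb_compat[OF ga])
  have "range f \<subseteq> orbit_sets act C \<times> orbit_sets act D"
    unfolding f_def orbit_sets_def by auto
  then have fin: "finite (range f)"
    using orbit_sets_finite[OF pf C] orbit_sets_finite[OF pf D] finite_subset by blast
  have t1: "fst (f h) = act (- h) ` C" for h by (simp add: f_def)
  have t2: "snd (f h) = act (- h) ` D" for h by (simp add: f_def)
  have t3: "fst (f h) \<union> snd (f h) = act (- h) ` (C \<union> D)" for h by (simp add: f_def image_Un)
  have n1: "nu act x0 C = real (card {r\<in>range f. x0 \<in> fst r}) / real (card (range f))"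
    by (rule nu_via[of act f fst C x0, OF ga compf t1 fin])
  have n2: "nu act x0 D = real (card {r\<in>range f. x0 \<in> snd r}) / real (card (range f))"
    by (rule nu_via[of act f snd D x0, OF ga compf t2 fin])
  have n3: "nu act x0 (C \<union> D) = real (card {r\<in>range f. x0 \<in> (\<lambda>r. fst r \<union> snd r) r}) / real (card (range f))"
    by (rule nu_via[of act f "\<lambda>r. fst r \<union> snd r" "C \<union> D" x0, OF ga compf t3 fin])
  have dj: "fst r \<inter> snd r = {}" if r_in: "r \<in> range f" for r
  proof -
    obtain h where r: "r = f h" using r_in by blast
    have "act (- h) ` C \<inter> act (- h) ` D = act (- h) ` (C \<inter> D)"
      by (rule ga_image_Int[OF ga, symmetric])
    then show ?thesis using disj by (simp add: r f_def)
  qed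
  have "{r\<in>range f. x0 \<in> fst r \<union> snd r} = {r\<in>range f. x0 \<in> fst r} \<union> {r\<in>range f. x0 \<in> snd r}"
    by auto
  moreover have "{r\<in>range f. x0 \<in> fst r} \<inter> {r\<in>range f. x0 \<in> snd r} = {}"
    using dj by auto
  ultimately have "card {r\<in>range f. x0 \<in> fst r \<union> snd r}
     = card {r\<in>range f. x0 \<in> fst r} + card {r\<in>range f. x0 \<in> snd r}"
    using fin by (simp add: card_Un_disjoint)
  then show ?thesis unfolding n1 n2 n3 by (simp add: add_divide_distrib)
qed

lemma nu_inv:
  assumes ga: "group_action act"
  shows "nu act x0 (act g ` C) = nu act x0 C"
proof -
  have "orbit_sets act (act g ` C) = orbit_sets act C"
  proof -
    have "{act k ` (act g ` C) | k. True} = {act k ` C | k. True}"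
    proof (intro set_eqI iffI)
      fix S assume "S \<in> {act k ` (act g ` C) | k. True}"
      then show "S \<in> {act k ` C | k. True}" by (auto simp: ga_image_image[OF ga])
    next
      fix S assume "S \<in> {act k ` C | k. True}"
      then obtain k where "S = act k ` C" by auto
      then have "S = act (k + - g) ` (act g ` C)"
        by (simp add: ga_image_image[OF ga] add.assoc)
      then show "S \<in> {act k ` (act g ` C) | k. True}" by blast
    qed
    then show ?thesis by (simp add: orbit_sets_eq)
  qed
  then show ?thesis unfolding nu_def by simp
qed

lemma nu_UNIV: assumes ga: "group_action act" shows "nu act x0 UNIV = 1"
proof -
  have "act g ` UNIV = UNIV" for g
    by (metis ga ga_inv2 surjI)
  then have "orbit_sets act UNIV = {UNIV}" unfolding orbit_sets_def by auto
  moreover have "{D\<in>{UNIV}. x0 \<in> D} = {UNIV}" by auto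
  ultimately show ?thesis unfolding nu_def by simp
qed

lemma nu_empty: "nu act x0 {} = 0"
proof -
  have "orbit_sets act {} = {{}}" unfolding orbit_sets_def by auto
  then show ?thesis unfolding nu_def by simp
qed

lemma nu_nonneg: "nu act x0 C \<ge> 0"
  unfolding nu_def by simp



lemma clopen_Union_finite:
  "finite F \<Longrightarrow> (\<And>C. C \<in> F \<Longrightarrow> clopen_set C) \<Longrightarrow> clopen_set (\<Union>F)"
  unfolding clopen_set_def by (auto intro: open_Union closed_Union)

lemma open_in_sigma_clopen:
  fixes S :: "'x::metric_space set"
  assumes cU: "compact (UNIV :: 'x set)" and zd: "zero_dimensional TYPE('x)"
    and S: "open S"
  shows "S \<in> sigma_sets UNIV {C. clopen_set C}"
proof (cases "S = UNIV")
  case True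
  have "clopen_set (UNIV :: 'x set)" unfolding clopen_set_def by simp
  then show ?thesis using True by auto
next
  case False
  define K where "K n = {x. inverse (real (Suc n)) \<le> infdist x (- S)}" for n
  have Ucov: "\<exists>U. clopen_set U \<and> K n \<subseteq> U \<and> U \<subseteq> S" for n
  proof -
    have cl: "closed (K n)" unfolding K_def
      by (rule closed_Collect_le) (auto intro: continuous_intros)
    then have cK: "compact (K n)" using compact_Int_closed[OF cU cl] by simp
    have KS: "K n \<subseteq> S"
    proof
      fix x assume "x \<in> K n"
      then have "infdist x (- S) > 0" unfolding K_def
        by (metis less_le_trans inverse_positive_iff_positive of_nat_0_less_iff zero_less_Suc mem_Collect_eq)
      then show "x \<in> S" by (metis ComplI infdist_zero less_irrefl)
    qed
    have "K n \<subseteq> \<Union>{C. clopen_set C \<and> C \<subseteq> S}"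
    proof
      fix x assume "x \<in> K n"
      then have "x \<in> S" using KS by blast
      then obtain C where "clopen_set C" "x \<in> C" "C \<subseteq> S"
        using zd S unfolding zero_dimensional_def by blast
      then show "x \<in> \<Union>{C. clopen_set C \<and> C \<subseteq> S}" by blast
    qed
    then obtain F where F: "F \<subseteq> {C. clopen_set C \<and> C \<subseteq> S}" "finite F" "K n \<subseteq> \<Union>F"
      using compactE[OF cK] unfolding clopen_set_def by (metis (no_types, lifting) mem_Collect_eq)
    have "clopen_set (\<Union>F)" using F by (intro clopen_Union_finite) auto
    moreover have "\<Union>F \<subseteq> S" using F by auto
    ultimately show ?thesis using F by blast
  qed
  then obtain U where U: "\<And>n. clopen_set (U n) \<and> K n \<subseteq> U n \<and> U n \<subseteq> S"
    by metis
  have "S = (\<Union>n. U n)"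
  proof
    show "(\<Union>n. U n) \<subseteq> S" using U by blast
    show "S \<subseteq> (\<Union>n. U n)"
    proof
      fix x assume x: "x \<in> S"
      have "closed (- S)" using S by auto
      moreover have "- S \<noteq> {}" using False by auto
      ultimately have "infdist x (- S) > 0" using x by (intro infdist_pos_not_in_closed) auto
      then obtain n where "inverse (real (Suc n)) < infdist x (- S)"
        using reals_Archimedean by blast
      then have "x \<in> K n" unfolding K_def by simp
      then show "x \<in> (\<Union>n. U n)" using U by blast
    qed
  qed
  moreover have "U n \<in> sigma_sets UNIV {C. clopen_set C}" for n
    using U by auto
  ultimately show ?thesis by (metis sigma_sets.Union)
qed

lemma sigma_clopen_borel:
  assumes cU: "compact (UNIV :: 'x::metric_space set)" and zd: "zero_dimensional TYPE('x)"
  shows "sigma_sets UNIV {C::'x set. clopen_set C} = sets borel"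
proof
  show "sigma_sets UNIV {C::'x set. clopen_set C} \<subseteq> sets borel"
    unfolding sets_borel by (rule sigma_sets_mono') (auto simp: clopen_set_def)
  show "sets borel \<subseteq> sigma_sets UNIV {C::'x set. clopen_set C}"
    unfolding sets_borel by (rule sigma_sets_mono) (auto intro: open_in_sigma_clopen[OF cU zd])
qed



lemma decseq_clopen_empty:
  fixes A :: "nat \<Rightarrow> 'x::topological_space set"
  assumes cU: "compact (UNIV :: 'x set)" and cl: "\<And>i. closed (A i)"
    and dec: "decseq A" and emp: "(\<Inter>i. A i) = {}"
  shows "\<exists>n. A n = {}"
proof (rule ccontr)
  assume ne: "\<not> (\<exists>n. A n = {})"
  have "UNIV \<inter> (\<Inter>i\<in>UNIV. A i) \<noteq> {}"
  proof (rule compact_imp_fip_image[OF cU])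
    show "closed (A i)" for i by (rule cl)
    fix I' :: "nat set" assume fI: "finite I'"
    show "UNIV \<inter> (\<Inter>i\<in>I'. A i) \<noteq> {}"
    proof (cases "I' = {}")
      case True then show ?thesis by simp
    next
      case False
      let ?m = "Max I'"
      have "A ?m \<subseteq> A i" if "i \<in> I'" for i
        using dec Max_ge[OF fI that] by (simp add: decseq_def)
      then have "A ?m \<subseteq> (\<Inter>i\<in>I'. A i)" by blast
      moreover have "A ?m \<noteq> {}" using ne by blast
      ultimately show ?thesis by blast
    qed
  qed
  then show False using emp by simp
qed

lemma exists_inv_measure:
  fixes act :: "'g::group_add \<Rightarrow> 'x::metric_space \<Rightarrow> 'x"
  assumes cU: "compact (UNIV :: 'x set)" and zd: "zero_dimensional TYPE('x)"
    and ga: "group_action act" and pf: "profinite_action act"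
  shows "\<exists>\<mu>. \<mu> \<in> inv_prob_measures act"
proof -
  define Mc where "Mc = {C :: 'x set. clopen_set C}"
  define x0 :: 'x where "x0 = undefined"
  define f where "f C = ennreal (nu act x0 C)" for C
  have alg: "algebra UNIV Mc"
    unfolding algebra_iff_Un Mc_def clopen_set_def
    by (auto simp: Compl_eq_Diff_UNIV[symmetric] open_Un closed_Un open_Compl closed_Compl)
  interpret algebra UNIV Mc by (rule alg)
  have pos: "positive Mc f" unfolding positive_def f_def by (simp add: nu_empty)
  have add: "additive Mc f"
    unfolding additive_def
  proof (intro ballI impI)
    fix x y assume xy: "x \<in> Mc" "y \<in> Mc" "x \<inter> y = {}"
    have "nu act x0 (x \<union> y) = nu act x0 x + nu act x0 y"
      by (rule nu_add[OF ga pf]) (use xy in \<open>simp_all add: Mc_def\<close>)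
    then show "f (x \<union> y) = f x + f y"
      unfolding f_def by (simp add: ennreal_plus nu_nonneg)
  qed
  have fin: "\<And>A. A \<in> Mc \<Longrightarrow> f A \<noteq> \<infinity>" unfolding f_def by simp
  have cont: "(\<lambda>i. f (A i)) \<longlonglongrightarrow> 0"
    if A: "range A \<subseteq> Mc" "decseq A" "(\<Inter>i. A i) = {}" for A
  proof -
    have "\<exists>n. A n = {}"
      by (rule decseq_clopen_empty[OF cU _ A(2,3)]) (use A(1) in \<open>auto simp: Mc_def clopen_set_def\<close>)
    then obtain n where n: "A n = {}" by blast
    have "\<forall>m\<ge>n. f (A m) = 0"
    proof (intro allI impI)
      fix m assume "n \<le> m"
      then have "A m \<subseteq> A n" using A(2) by (simp add: decseq_def)
      then have "A m = {}" using n by blast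
      then show "f (A m) = 0" by (simp add: f_def nu_empty)
    qed
    then have "eventually (\<lambda>m. f (A m) = 0) sequentially"
      unfolding eventually_sequentially by blast
    then show ?thesis by (simp add: tendsto_eventually)
  qed
  obtain \<mu>' where mu': "\<forall>s\<in>Mc. \<mu>' s = f s" "measure_space UNIV (sigma_sets UNIV Mc) \<mu>'"
    using caratheodory_empty_continuous[OF pos add fin cont] by blast
  define M where "M = measure_of UNIV (sigma_sets UNIV Mc) \<mu>'"
  have sig: "sigma_algebra UNIV (sigma_sets UNIV Mc)"
    by (rule sigma_algebra_sigma_sets) (simp add: Mc_def)
  have "sets M = sigma_sets UNIV (sigma_sets UNIV Mc)" unfolding M_def by (rule sets_measure_of) simp
  also have "\<dots> = sigma_sets UNIV Mc" by (rule sigma_sets_sigma_sets_eq) simp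
  also have "\<dots> = sets borel" using sigma_clopen_borel[OF cU zd] unfolding Mc_def .
  finally have setsM: "sets M = sets borel" .
  have spaceM: "space M = UNIV" unfolding M_def by simp
  have emM: "emeasure M C = f C" if "C \<in> Mc" for C
  proof -
    have "emeasure M C = \<mu>' C" unfolding M_def
      by (rule emeasure_measure_of_sigma[OF sig])
         (use mu'(2) that in \<open>auto simp: measure_space_def\<close>)
    then show ?thesis using mu'(1) that by simp
  qed
  have Mc_sets: "Mc \<subseteq> sets M" unfolding setsM Mc_def clopen_set_def by auto
  have UNIV_Mc: "UNIV \<in> Mc" unfolding Mc_def clopen_set_def by simp
  have prob: "prob_space M"
    by (rule prob_spaceI) (simp add: spaceM emM[OF UNIV_Mc] f_def nu_UNIV[OF ga])
  have meas: "act g \<in> measurable M M" for g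
    unfolding measurable_cong_sets[OF setsM setsM]
    by (rule borel_measurable_continuous_onI[OF ga_cont[OF ga]])
  have top: "UNIV \<in> sets M" using sets.top[of M] spaceM by simp
  have sigM: "sets M = sigma_sets UNIV Mc"
    using setsM sigma_clopen_borel[OF cU zd] by (simp add: Mc_def)
  have inv: "emeasure M (act g -` A) = emeasure M A" if A: "A \<in> sets borel" for g A
  proof -
    have dM: "distr M M (act g) = M"
    proof (rule measure_eqI_generator_eq[where E = Mc and \<Omega> = UNIV and A = "\<lambda>_. UNIV"])
      show "Int_stable Mc" by (rule Int_stable)
      show "Mc \<subseteq> Pow UNIV" by simp
      show "sets (distr M M (act g)) = sigma_sets UNIV Mc"
        using sigM by simp
      show "sets M = sigma_sets UNIV Mc" by (rule sigM)
      show "range (\<lambda>_. UNIV) \<subseteq> Mc" using UNIV_Mc by auto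
      show "(\<Union>i. UNIV) = UNIV" by simp
      have "emeasure (distr M M (act g)) UNIV = emeasure M (act g -` UNIV \<inter> space M)"
        by (rule emeasure_distr[OF meas top])
      also have "\<dots> = emeasure M (space M)" by simp
      also have "\<dots> = 1" by (rule prob_space.emeasure_space_1[OF prob])
      finally show "emeasure (distr M M (act g)) UNIV \<noteq> \<infinity>" by simp
    next
      fix X assume X: "X \<in> Mc"
      have X': "act g -` X \<in> Mc"
        using ga_clopen[OF ga, of X "-g"] X by (simp add: Mc_def ga_vimage[OF ga])
      have XM: "X \<in> sets M" using X Mc_sets by blast
      have "emeasure (distr M M (act g)) X = emeasure M (act g -` X \<inter> space M)"
        by (rule emeasure_distr[OF meas XM])
      also have "\<dots> = emeasure M (act g -` X)" by (simp add: spaceM)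
      also have "\<dots> = f (act g -` X)" by (rule emM[OF X'])
      also have "\<dots> = f X" unfolding f_def ga_vimage[OF ga] nu_inv[OF ga] ..
      also have "\<dots> = emeasure M X" by (rule emM[OF X, symmetric])
      finally show "emeasure (distr M M (act g)) X = emeasure M X" .
    qed
    have AM: "A \<in> sets M" using A setsM by simp
    have "emeasure (distr M M (act g)) A = emeasure M (act g -` A \<inter> space M)"
      by (rule emeasure_distr[OF meas AM])
    then show ?thesis using dM by (simp add: spaceM)
  qed
  have "M \<in> inv_prob_measures act"
    unfolding inv_prob_measures_def using setsM prob inv by blast
  then show ?thesis by blast
qed



definition atom_of :: "'x set set \<Rightarrow> 'x \<Rightarrow> 'x set" where
  "atom_of S x = {y. \<forall>D\<in>S. y \<in> D \<longleftrightarrow> x \<in> D}"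

lemma atom_self: "x \<in> atom_of S x"
  unfolding atom_of_def by simp

lemma atom_eq: "y \<in> atom_of S x \<Longrightarrow> atom_of S y = atom_of S x"
  unfolding atom_of_def by auto

lemma atom_disj: "atom_of S x \<noteq> atom_of S y \<Longrightarrow> atom_of S x \<inter> atom_of S y = {}"
proof -
  assume ne: "atom_of S x \<noteq> atom_of S y"
  show ?thesis
  proof (rule ccontr)
    assume "atom_of S x \<inter> atom_of S y \<noteq> {}"
    then obtain z where z: "z \<in> atom_of S x" "z \<in> atom_of S y" by blast
    have "atom_of S z = atom_of S x" by (rule atom_eq[OF z(1)])
    moreover have "atom_of S z = atom_of S y" by (rule atom_eq[OF z(2)])
    ultimately show False using ne by simp
  qed
qed

lemma atom_sub: "D \<in> S \<Longrightarrow> x \<in> D \<Longrightarrow> atom_of S x \<subseteq> D"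
  unfolding atom_of_def by auto

lemma atom_clopen:
  assumes "finite S" "\<And>D. D \<in> S \<Longrightarrow> clopen_set D"
  shows "clopen_set (atom_of S x)"
proof -
  have eq: "atom_of S x = (\<Inter>D\<in>S. (if x \<in> D then D else - D))"
    unfolding atom_of_def by auto
  have "open (if x \<in> D then D else - D)" "closed (if x \<in> D then D else - D)" if "D \<in> S" for D
    using assms(2)[OF that] unfolding clopen_set_def by auto
  then show ?thesis unfolding eq clopen_set_def using assms(1)
    by (intro conjI open_INT closed_INT ballI) auto
qed

lemma atom_finite:
  assumes "finite S" shows "finite (range (atom_of S))"
proof -
  have "range (atom_of S) \<subseteq> (\<lambda>T. {y. {D\<in>S. y \<in> D} = T}) ` Pow S"
  proof
    fix a assume "a \<in> range (atom_of S)"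
    then obtain x where a: "a = atom_of S x" by blast
    have "a = {y. {D\<in>S. y \<in> D} = {D\<in>S. x \<in> D}}"
      unfolding a atom_of_def by blast
    then show "a \<in> (\<lambda>T. {y. {D\<in>S. y \<in> D} = T}) ` Pow S" by blast
  qed
  then show ?thesis using assms finite_subset by blast
qed

lemma atom_act:
  assumes ga: "group_action act" and inv: "\<And>D g. D \<in> S \<Longrightarrow> act g ` D \<in> S"
  shows "atom_of S (act g x) = act g ` atom_of S x"
proof (intro set_eqI iffI)
  fix y assume y: "y \<in> atom_of S (act g x)"
  have "act (- g) y \<in> atom_of S x" unfolding atom_of_def
  proof (intro CollectI ballI)
    fix E assume E: "E \<in> S"
    have "act g ` E \<in> S" by (rule inv[OF E])
    then have "y \<in> act g ` E \<longleftrightarrow> act g x \<in> act g ` E" using y unfolding atom_of_def by blast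
    moreover have "y \<in> act g ` E \<longleftrightarrow> act (- g) y \<in> E"
      using ga_vimage[OF ga, of "-g" E] by (metis minus_minus vimage_eq)
    moreover have "act g x \<in> act g ` E \<longleftrightarrow> x \<in> E"
      using ga_inj[OF ga] by (simp add: inj_image_mem_iff)
    ultimately show "act (- g) y \<in> E \<longleftrightarrow> x \<in> E" by simp
  qed
  then show "y \<in> act g ` atom_of S x"
    using ga_inv2[OF ga, of g y] by (metis image_eqI)
next
  fix y assume "y \<in> act g ` atom_of S x"
  then obtain z where z: "z \<in> atom_of S x" "y = act g z" by blast
  show "y \<in> atom_of S (act g x)" unfolding atom_of_def
  proof (intro CollectI ballI)
    fix D assume D: "D \<in> S"
    have "act (- g) ` D \<in> S" by (rule inv[OF D])
    then have "z \<in> act (- g) ` D \<longleftrightarrow> x \<in> act (- g) ` D" using z(1) unfolding atom_of_def by blast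
    moreover have "w \<in> act (- g) ` D \<longleftrightarrow> act g w \<in> D" for w
      using ga_vimage[OF ga, of g D] by (metis vimage_eq)
    ultimately show "y \<in> D \<longleftrightarrow> act g x \<in> D" using z(2) by simp
  qed
qed

lemma atom_trans:
  assumes ga: "group_action act" and inv: "\<And>D g. D \<in> S \<Longrightarrow> act g ` D \<in> S"
    and mi: "minimal_action act" and op: "open (atom_of S y)"
  shows "\<exists>g. atom_of S y = act g ` atom_of S x"
proof -
  have "closure (range (\<lambda>g. act g x)) = UNIV" using mi unfolding minimal_action_def by blast
  then have "atom_of S y \<inter> closure (range (\<lambda>g. act g x)) \<noteq> {}" using atom_self[of y S] by blast
  then have "atom_of S y \<inter> range (\<lambda>g. act g x) \<noteq> {}" using open_Int_closure_eq_empty[OF op] by blast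
  then obtain g where "act g x \<in> atom_of S y" by blast
  then have "atom_of S (act g x) = atom_of S y" by (rule atom_eq)
  then show ?thesis using atom_act[OF ga inv] by metis
qed



theorem lemma2p4:
  fixes act :: "'g::group_add \<Rightarrow> 'x::metric_space \<Rightarrow> 'x"
  assumes "countable (UNIV :: 'g set)"
    and "compact (UNIV :: 'x set)"
    and "zero_dimensional TYPE('x)"
    and "group_action act"
    and "profinite_action act"
    and "minimal_action act"
  shows "has_comparison act"
  unfolding has_comparison_def
proof (intro allI impI, elim conjE)
  note cU = assms(2) and zd = assms(3) and ga = assms(4) and pf = assms(5) and mi = assms(6)
  fix A B :: "'x set"
  assume A: "clopen_set A" and B: "clopen_set B" and hyp: "\<forall>\<mu>\<in>inv_prob_measures act. measure \<mu> A < measure \<mu> B"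
  define S where "S = orbit_sets act A \<union> orbit_sets act B"
  have finS: "finite S" unfolding S_def using orbit_sets_finite[OF pf A] orbit_sets_finite[OF pf B] by simp
  have orbS: "\<exists>g E. D = act g ` E \<and> (E = A \<or> E = B)" if "D \<in> S" for D
  proof -
    have "D \<in> {act g ` A | g. True} \<or> D \<in> {act g ` B | g. True}"
      using that unfolding S_def orbit_sets_eq by simp
    then show ?thesis by blast
  qed
  have inS: "act g ` E \<in> S" if "E = A \<or> E = B" for E g
    using that unfolding S_def orbit_sets_eq by blast
  have clS: "clopen_set D" if D_in: "D \<in> S" for D
  proof -
    obtain g E where "D = act g ` E" "E = A \<or> E = B" using orbS[OF D_in] by blast
    then show ?thesis using A B ga_clopen[OF ga] by metis
  qed
  have invS: "act g ` D \<in> S" if D_in: "D \<in> S" for D g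
  proof -
    obtain h E where hE: "D = act h ` E" "E = A \<or> E = B" using orbS[OF D_in] by blast
    then have "act g ` D = act (g + h) ` E" by (simp add: ga_image_image[OF ga])
    then show ?thesis using inS[OF hE(2)] by simp
  qed
  have inS0: "E \<in> S" if "E = A \<or> E = B" for E
    using inS[OF that, of 0] ga_zero[OF ga] by simp
  define atm where "atm = atom_of S"
  define Atoms where "Atoms = range atm"
  have finAt: "finite Atoms" unfolding Atoms_def atm_def by (rule atom_finite[OF finS])
  have clAt: "clopen_set (atm x)" for x unfolding atm_def by (rule atom_clopen[OF finS clS])
  have trans: "\<exists>g. atm y = act g ` atm x" for x y
    unfolding atm_def by (rule atom_trans[OF ga invS mi]) (use clAt in \<open>auto simp: atm_def clopen_set_def\<close>)
  have disjAt: "a \<inter> b = {}" if ab: "a \<in> Atoms" "b \<in> Atoms" "a \<noteq> b" for a b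
  proof -
    obtain x y where "a = atom_of S x" "b = atom_of S y" using ab(1,2) unfolding Atoms_def atm_def by blast
    then show ?thesis using atom_disj ab(3) by metis
  qed
  define AtA where "AtA = {a\<in>Atoms. a \<subseteq> A}"
  define AtB where "AtB = {a\<in>Atoms. a \<subseteq> B}"
  have unA: "\<Union>AtA = A"
  proof
    show "\<Union>AtA \<subseteq> A" unfolding AtA_def by blast
    show "A \<subseteq> \<Union>AtA"
    proof
      fix x assume x: "x \<in> A"
      have "atm x \<subseteq> A" unfolding atm_def by (rule atom_sub[OF inS0 x]) simp
      moreover have "atm x \<in> Atoms" unfolding Atoms_def by simp
      ultimately have "atm x \<in> AtA" unfolding AtA_def by simp
      moreover have "x \<in> atm x" unfolding atm_def by (rule atom_self)
      ultimately show "x \<in> \<Union>AtA" by blast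
    qed
  qed
  have unB: "\<Union>AtB = B"
  proof
    show "\<Union>AtB \<subseteq> B" unfolding AtB_def by blast
    show "B \<subseteq> \<Union>AtB"
    proof
      fix x assume x: "x \<in> B"
      have "atm x \<subseteq> B" unfolding atm_def by (rule atom_sub[OF inS0 x]) simp
      moreover have "atm x \<in> Atoms" unfolding Atoms_def by simp
      ultimately have "atm x \<in> AtB" unfolding AtB_def by simp
      moreover have "x \<in> atm x" unfolding atm_def by (rule atom_self)
      ultimately show "x \<in> \<Union>AtB" by blast
    qed
  qed
  have finA: "finite AtA" "finite AtB" unfolding AtA_def AtB_def using finAt by simp_all
  obtain \<mu> where mu: "\<mu> \<in> inv_prob_measures act" using exists_inv_measure[OF cU zd ga pf] by blast
  have setsmu: "sets \<mu> = sets borel" and probmu: "prob_space \<mu>"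
    and invmu: "\<And>g X. X \<in> sets borel \<Longrightarrow> emeasure \<mu> (act g -` X) = emeasure \<mu> X"
    using mu unfolding inv_prob_measures_def by auto
  define x0 :: 'x where "x0 = undefined"
  define m where "m = measure \<mu> (atm x0)"
  have at_sets: "a \<in> sets \<mu>" if "a \<in> Atoms" for a
    using that clAt unfolding Atoms_def setsmu clopen_set_def by auto
  have meq: "measure \<mu> a = m" if a_in: "a \<in> Atoms" for a
  proof -
    obtain y where y: "a = atm y" using a_in unfolding Atoms_def by blast
    obtain g where g: "atm y = act g ` atm x0" using trans by blast
    have "act g ` atm x0 = act (- g) -` atm x0" using ga_vimage[OF ga, of "-g" "atm x0"] by simp
    moreover have "atm x0 \<in> sets borel" using clAt unfolding clopen_set_def by auto
    ultimately have "emeasure \<mu> a = emeasure \<mu> (atm x0)" using invmu y g by simp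
    then show ?thesis unfolding m_def measure_def by simp
  qed
  have fin_em: "emeasure \<mu> X \<noteq> \<infinity>" for X
    using probmu unfolding prob_space_def by (simp add: finite_measure.emeasure_finite)
  have mX: "measure \<mu> (\<Union>AtX) = real (card AtX) * m" if "AtX \<subseteq> Atoms" for AtX
  proof -
    have fX: "finite AtX" using that finAt finite_subset by blast
    have "measure \<mu> (\<Union>a\<in>AtX. id a) = (\<Sum>a\<in>AtX. measure \<mu> (id a))"
    proof (rule measure_finite_Union[OF fX])
      show "id ` AtX \<subseteq> sets \<mu>" using that at_sets by auto
      show "disjoint_family_on id AtX" unfolding disjoint_family_on_def
      proof (intro ballI impI)
        fix a b assume "a \<in> AtX" "b \<in> AtX" "a \<noteq> b"
        then show "id a \<inter> id b = {}" using that disjAt by auto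
      qed
      show "\<And>i. i \<in> AtX \<Longrightarrow> emeasure \<mu> (id i) \<noteq> \<infinity>" using fin_em by simp
    qed
    also have "\<dots> = (\<Sum>a\<in>AtX. m)" using that meq by (intro sum.cong) auto
    finally show ?thesis by simp
  qed
  have "measure \<mu> A < measure \<mu> B" using hyp mu by blast
  then have "real (card AtA) * m < real (card AtB) * m"
    using mX[of AtA] mX[of AtB] unA unB unfolding AtA_def AtB_def by auto
  moreover have "m \<ge> 0" unfolding m_def by simp
  ultimately have "card AtA \<le> card AtB"
    by (metis mult_right_mono not_le of_nat_le_iff order_less_imp_le not_less)
  then obtain \<sigma> where sig: "\<sigma> ` AtA \<subseteq> AtB" "inj_on \<sigma> AtA"
    using card_le_inj[OF finA] by blast
  obtain e where e: "bij_betw e {0..<card AtA} AtA" using ex_bij_betw_nat_finite[OF finA(1)] by blast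
  define n where "n = card AtA"
  have ex_g: "\<exists>g. \<sigma> a = act g ` a" if "a \<in> AtA" for a
  proof -
    have "a \<in> Atoms" "\<sigma> a \<in> Atoms" using that sig unfolding AtA_def AtB_def by auto
    then obtain x y where "a = atm x" "\<sigma> a = atm y" unfolding Atoms_def by blast
    then show ?thesis using trans by metis
  qed
  define \<gamma> where "\<gamma> i = (SOME g. \<sigma> (e i) = act g ` e i)" for i
  have eA: "e i \<in> AtA" if "i < n" for i using e that unfolding n_def bij_betw_def by auto
  have gam: "act (\<gamma> i) ` e i = \<sigma> (e i)" if "i < n" for i
    unfolding \<gamma>_def using someI_ex[OF ex_g[OF eA[OF that]]] by simp
  have einj: "e i \<noteq> e j" if "i < n" "j < n" "i \<noteq> j" for i j
    using e that unfolding n_def bij_betw_def inj_on_def by auto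
  have eAt: "e i \<in> Atoms" if "i < n" for i using eA[OF that] unfolding AtA_def by auto
  have sB: "\<sigma> (e i) \<in> AtB" if "i < n" for i using sig eA[OF that] by auto
  have sAt: "\<sigma> (e i) \<in> Atoms" if "i < n" for i using sB[OF that] unfolding AtB_def by auto
  show "\<exists>(n::nat) (C::nat \<Rightarrow> 'x set) (\<gamma>::nat \<Rightarrow> 'g).
            (\<forall>i<n. clopen_set (C i)) \<and>
            disjoint_family_on C {..<n} \<and>
            A = (\<Union>i<n. C i) \<and>
            disjoint_family_on (\<lambda>i. act (\<gamma> i) ` C i) {..<n} \<and>
            (\<forall>i<n. act (\<gamma> i) ` C i \<subseteq> B)"
  proof (intro exI conjI)
    show "\<forall>i<n. clopen_set (e i)"
    proof (intro allI impI)
      fix i assume "i < n"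
      then obtain x where "e i = atm x" using eAt unfolding Atoms_def by blast
      then show "clopen_set (e i)" using clAt by simp
    qed
    show "disjoint_family_on e {..<n}"
      unfolding disjoint_family_on_def using einj eAt disjAt by auto
    have "(\<Union>i<n. e i) = \<Union>AtA"
      using e unfolding n_def bij_betw_def by (simp add: atLeast0LessThan)
    then show "A = (\<Union>i<n. e i)" using unA by simp
    show "disjoint_family_on (\<lambda>i. act (\<gamma> i) ` e i) {..<n}"
    proof (unfold disjoint_family_on_def, intro ballI impI)
      fix i j assume ij: "i \<in> {..<n}" "j \<in> {..<n}" "i \<noteq> j"
      have "i < n" "j < n" using ij by auto
      then have "e i \<in> AtA" "e j \<in> AtA" "e i \<noteq> e j" using eA einj ij(3) by auto
      then have "\<sigma> (e i) \<noteq> \<sigma> (e j)"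
        using sig(2) unfolding inj_on_def by metis
      then show "act (\<gamma> i) ` e i \<inter> act (\<gamma> j) ` e j = {}"
        using ij gam sAt disjAt by auto
    qed
    show "\<forall>i<n. act (\<gamma> i) ` e i \<subseteq> B"
      using gam sB unfolding AtB_def by auto
  qed
qed


end
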